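(* Let $n=p_1^{m_1}\cdots p_k^{m_k}$ with $m_i>1$ for at least one $i$. Then: (1) The Laplacian spectrum of $\mathcal E_{\mathbb Z_n}(\mathscr U)$ consists of $N_I$ with multiplicity $n_I-1=\prod_{i\notin\Xi_I}m_i-1$ for each $I\in V(\mathscr G)$ with $n_I>1$, together with the $2^k-2$ eigenvalues of the symmetric matrix $C_L(\mathscr G)$ indexed by $V(\mathscr G)$ with $(C_L)_{II}=N_I$, $(C_L)_{IJ}=-\sqrt{n_In_J}$ if $I\sim J$ in $\mathscr G$, $0$ otherwise. (2) The signless Laplacian spectrum of $\mathcal E_{\mathbb Z_n}(\mathscr U)$ consists of $N_I$ with multiplicity $n_I-1$ for each $I\in V(\mathscr G)$, together with the eigenvalues of the matrix $C_Q(\mathscr G)$ with $(C_Q)_{II}=N_I$, $(C_Q)_{IJ}=\sqrt{n_In_J}$ if $I\sim J$ in $\mathscr G$, $0$ otherwise. (3) The normalized Laplacian spectrum of $\mathcal E_{\mathbb Z_n}(\mathscr U)$ consists of $1$ with multiplicity $\sum_{I\in V(\mathscr G)}(n_I-1)$, together with the eigenvalues of the matrix $C_{\mathscr L}(\mathscr G)$ with $(C_{\mathscr L})_{II}=1$, $(C_{\mathscr L})_{IJ}=-\sqrt{\frac{n_In_J}{N_IN_J}}$ if $I\sim J$ in $\mathscr G$, $0$ otherwise.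
   Context: Primes $p_1<\dots<p_k$, positive integers $m_i$. Nonzero proper ideals of $\mathbb Z_n$ are uniquely $\langle p_1^{r_1}\cdots p_k^{r_k}\rangle$, $0\le r_i\le m_i$, $(r_i)\ne(0,\dots,0),(m_1,\dots,m_k)$; essential iff $r_j\ne m_j$ for all $j$. Essential ideal graph $\mathcal E_{\mathbb Z_n}$: vertices nonzero proper ideals, distinct $I,K$ adjacent iff $I+K$ essential. $\mathscr U$ = nonzero proper nonessential ideals, $\mathcal E_{\mathbb Z_n}(\mathscr U)$ the induced subgraph. $\Xi_I=\{i:r_i=m_i\}$; $[I]=\{J\in\mathscr U:\Xi_J=\Xi_I\}$. $\mathscr G$: vertex set the $2^k-2$ ideals $\langle\prod_{i\in S}p_i^{m_i}\rangle$, $S$ nonempty proper subset of $\{1,\dots,k\}$, $I\sim J$ iff $\Xi_I\cap\Xi_J=\emptyset$. $n_I=|[I]|=\prod_{i\notin\Xi_I}m_i$ and $N_I=\sum_{J\in V(\mathscr G),\,\Xi_I\cap\Xi_J=\emptyset}n_J$. For a graph with adjacency matrix $A$ and degree matrix $D$: Laplacian $L=D-A$, signless Laplacian $Q=D+A$, normalized Laplacian $\mathscr L=D^{-1/2}LD^{-1/2}$. *)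

theory Defs
  imports "Jordan_Normal_Form.Char_Poly" "HOL-Computational_Algebra.Primes"
begin

text \<open>Ideals of Z_n are represented by their generators: the nonzero proper ideal
  generated by a divisor d of n (d \<noteq> 1 for proper, d \<noteq> n for nonzero).
  With n = p_1^m_1 ... p_k^m_k, the exponent r_i is multiplicity p_i d.\<close>

definition ideals :: "nat \<Rightarrow> nat set" where
  "ideals n = {d. d dvd n \<and> d \<noteq> 1 \<and> d \<noteq> n}"

text \<open>Essential: r_j \<noteq> m_j for all j (applied to any divisor, e.g. gcd = sum of ideals).\<close>
definition essential :: "nat \<Rightarrow> nat \<Rightarrow> bool" where
  "essential n d \<longleftrightarrow> d dvd n \<and> (\<forall>p\<in>prime_factors n. multiplicity p d \<noteq> multiplicity p n)"

definition Xi :: "nat \<Rightarrow> nat \<Rightarrow> nat set" where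
  "Xi n d = {p \<in> prime_factors n. multiplicity p d = multiplicity p n}"

definition Uset :: "nat \<Rightarrow> nat set" where
  "Uset n = {d \<in> ideals n. \<not> essential n d}"

text \<open>Essential ideal graph adjacency: I + K = <gcd d e> is essential.\<close>
definition Eadj :: "nat \<Rightarrow> nat \<Rightarrow> nat \<Rightarrow> bool" where
  "Eadj n d e \<longleftrightarrow> d \<noteq> e \<and> essential n (gcd d e)"

definition VG :: "nat \<Rightarrow> nat set" where
  "VG n = {\<Prod>p\<in>S. p ^ multiplicity p n | S. S \<subseteq> prime_factors n \<and> S \<noteq> {} \<and> S \<noteq> prime_factors n}"

definition Gadj :: "nat \<Rightarrow> nat \<Rightarrow> nat \<Rightarrow> bool" where
  "Gadj n d e \<longleftrightarrow> Xi n d \<inter> Xi n e = {}"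

definition nI :: "nat \<Rightarrow> nat \<Rightarrow> nat" where
  "nI n d = (\<Prod>p\<in>prime_factors n - Xi n d. multiplicity p n)"

definition NI :: "nat \<Rightarrow> nat \<Rightarrow> nat" where
  "NI n d = (\<Sum>J\<in>{J\<in>VG n. Xi n d \<inter> Xi n J = {}}. nI n J)"

definition vlist :: "nat set \<Rightarrow> nat list" where
  "vlist V = sorted_list_of_set V"

definition vmat :: "nat set \<Rightarrow> (nat \<Rightarrow> nat \<Rightarrow> real) \<Rightarrow> real mat" where
  "vmat V f = mat (length (vlist V)) (length (vlist V)) (\<lambda>(i,j). f (vlist V ! i) (vlist V ! j))"

definition deg :: "nat set \<Rightarrow> (nat \<Rightarrow> nat \<Rightarrow> bool) \<Rightarrow> nat \<Rightarrow> real" where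
  "deg V adj v = real (card {w\<in>V. adj v w})"

definition adj_matrix :: "nat set \<Rightarrow> (nat \<Rightarrow> nat \<Rightarrow> bool) \<Rightarrow> real mat" where
  "adj_matrix V adj = vmat V (\<lambda>u v. if adj u v then 1 else 0)"

definition deg_matrix :: "nat set \<Rightarrow> (nat \<Rightarrow> nat \<Rightarrow> bool) \<Rightarrow> real mat" where
  "deg_matrix V adj = vmat V (\<lambda>u v. if u = v then deg V adj u else 0)"

definition laplacian :: "nat set \<Rightarrow> (nat \<Rightarrow> nat \<Rightarrow> bool) \<Rightarrow> real mat" where
  "laplacian V adj = deg_matrix V adj - adj_matrix V adj"

definition signless_laplacian :: "nat set \<Rightarrow> (nat \<Rightarrow> nat \<Rightarrow> bool) \<Rightarrow> real mat" where
  "signless_laplacian V adj = deg_matrix V adj + adj_matrix V adj"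

definition deg_inv_sqrt_matrix :: "nat set \<Rightarrow> (nat \<Rightarrow> nat \<Rightarrow> bool) \<Rightarrow> real mat" where
  "deg_inv_sqrt_matrix V adj = vmat V (\<lambda>u v. if u = v then 1 / sqrt (deg V adj u) else 0)"

definition normalized_laplacian :: "nat set \<Rightarrow> (nat \<Rightarrow> nat \<Rightarrow> bool) \<Rightarrow> real mat" where
  "normalized_laplacian V adj =
     deg_inv_sqrt_matrix V adj * laplacian V adj * deg_inv_sqrt_matrix V adj"

definition CL :: "nat \<Rightarrow> real mat" where
  "CL n = vmat (VG n) (\<lambda>I J. if I = J then real (NI n I)
            else if Gadj n I J then - sqrt (real (nI n I * nI n J)) else 0)"

definition CQ :: "nat \<Rightarrow> real mat" where
  "CQ n = vmat (VG n) (\<lambda>I J. if I = J then real (NI n I)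
            else if Gadj n I J then sqrt (real (nI n I * nI n J)) else 0)"

definition CNL :: "nat \<Rightarrow> real mat" where
  "CNL n = vmat (VG n) (\<lambda>I J. if I = J then 1
            else if Gadj n I J then - sqrt (real (nI n I * nI n J) / real (NI n I * NI n J)) else 0)"

end

theory Submission imports Defs "Jordan_Normal_Form.Column_Operations" begin

definition matL :: "nat list \<Rightarrow> (nat \<Rightarrow> nat \<Rightarrow> 'a) \<Rightarrow> 'a mat" where
  "matL xs f = mat (length xs) (length xs) (\<lambda>(i,j). f (xs!i) (xs!j))"

lemma matL_carrier[simp]: "matL xs f \<in> carrier_mat (length xs) (length xs)"
  unfolding matL_def by simp

lemma matL_index[simp]: "i < length xs \<Longrightarrow> j < length xs \<Longrightarrow> matL xs f $$ (i,j) = f (xs!i) (xs!j)"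
  "dim_row (matL xs f) = length xs" "dim_col (matL xs f) = length xs"
  unfolding matL_def by auto

lemma det_permute_both:
  assumes A: "A \<in> carrier_mat n n" and p: "p permutes {0..<n}"
  shows "det (mat n n (\<lambda>(i,j). A $$ (p i, p j))) = det A"
proof -
  define B where "B = mat n n (\<lambda>(i,j). A $$ (i, p j))"
  have B: "B \<in> carrier_mat n n" unfolding B_def by simp
  have pi: "\<And>i. i < n \<Longrightarrow> p i < n" using p by (meson atLeastLessThan_iff permutes_in_image zero_le)
  have "mat n n (\<lambda>(i,j). A $$ (p i, p j)) = mat n n (\<lambda>(i,j). B $$ (p i, j))"
    by (rule eq_matI, auto simp: B_def pi)
  hence 1: "det (mat n n (\<lambda>(i,j). A $$ (p i, p j))) = signof p * det B"
    using det_permute_rows[OF B p] by simp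
  have "transpose_mat B = mat n n (\<lambda>(i,j). (transpose_mat A) $$ (p i, j))"
    by (rule eq_matI, insert A, auto simp: B_def pi)
  hence "det (transpose_mat B) = signof p * det (transpose_mat A)"
    using det_permute_rows[of "transpose_mat A" n p] A p by simp
  hence 2: "det B = signof p * det A" using det_transpose[OF B] det_transpose[OF A] by simp
  have "signof p * signof p = (1::'a)"
    by (simp add: sign_def)
  hence "signof p * (signof p * det A) = det A" by (metis mult.assoc mult_1)
  thus ?thesis unfolding 1 2 .
qed

lemma char_poly_matL_perm:
  assumes d1: "distinct xs" and d2: "distinct ys" and st: "set xs = set ys"
  shows "char_poly (matL ys f) = char_poly (matL xs f)"
proof -
  define n where "n = length xs"
  have len: "length ys = n" using distinct_card[OF d1] distinct_card[OF d2] st n_def by simp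
  define p where "p = (\<lambda>i. if i < n then (SOME j. j < n \<and> xs ! j = ys ! i) else i)"
  have pex: "p i < n \<and> xs ! p i = ys ! i" if i: "i < n" for i
  proof -
    have "ys ! i \<in> set xs" using i len st by auto
    then obtain j where j: "j < n \<and> xs ! j = ys ! i" unfolding n_def in_set_conv_nth by blast
    have "p i = (SOME j. j < n \<and> xs ! j = ys ! i)" unfolding p_def using i by simp
    thus ?thesis using someI[of "\<lambda>j. j < n \<and> xs ! j = ys ! i", OF j] by simp
  qed
  have pinj: "inj_on p {0..<n}"
  proof (rule inj_onI)
    fix i j assume i: "i \<in> {0..<n}" and j: "j \<in> {0..<n}" and e: "p i = p j"
    have "ys ! i = ys ! j" using e pex[of i] pex[of j] i j by simp
    thus "i = j" using d2 i j len by (simp add: nth_eq_iff_index_eq)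
  qed
  have pim: "p ` {0..<n} \<subseteq> {0..<n}" using pex by auto
  have pp: "p permutes {0..<n}"
  proof (rule bij_imp_permutes)
    show "bij_betw p {0..<n} {0..<n}" unfolding bij_betw_def using pinj endo_inj_surj[OF _ pim pinj] by simp
    show "\<And>x. x \<notin> {0..<n} \<Longrightarrow> p x = x" unfolding p_def by auto
  qed
  let ?C = "char_poly_matrix (matL xs f)"
  have C: "?C \<in> carrier_mat n n" unfolding n_def by simp
  have "char_poly_matrix (matL ys f) = mat n n (\<lambda>(i,j). ?C $$ (p i, p j))"
  proof (rule eq_matI)
    fix i j assume i: "i < dim_row (mat n n (\<lambda>(i,j). ?C $$ (p i, p j)))"
      and j: "j < dim_col (mat n n (\<lambda>(i,j). ?C $$ (p i, p j)))"
    hence i: "i < n" and j: "j < n" by auto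
    have "(p i = p j) = (i = j)" using pinj i j by (auto simp: inj_on_eq_iff)
    thus "char_poly_matrix (matL ys f) $$ (i, j) = mat n n (\<lambda>(i,j). ?C $$ (p i, p j)) $$ (i, j)"
      using i j pex[OF i] pex[OF j] len unfolding char_poly_matrix_def n_def by simp
  qed (auto simp: char_poly_matrix_def len)
  thus ?thesis unfolding char_poly_def using det_permute_both[OF C pp] by simp
qed


definition Mw :: "(nat \<Rightarrow> nat) \<Rightarrow> (nat \<Rightarrow> real) \<Rightarrow> (nat \<Rightarrow> nat \<Rightarrow> real) \<Rightarrow> (nat \<Rightarrow> real) \<Rightarrow> nat \<Rightarrow> nat \<Rightarrow> real" where
  "Mw cl a b w x y = (if x = y then a (cl x) else 0) + w x * b (cl x) (cl y)"

lemma cpm_index: "A \<in> carrier_mat n n \<Longrightarrow> i < n \<Longrightarrow> j < n \<Longrightarrow>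
  char_poly_matrix A $$ (i,j) = (if i = j then [:0,1:] else 0) + [:-(A $$ (i,j)):]"
  unfolding char_poly_matrix_def by auto

lemma cpm_matL_carrier: "n = length xs \<Longrightarrow> char_poly_matrix (matL xs f) \<in> carrier_mat n n"
  by (rule char_poly_matrix_closed, simp)

lemma twin:
  assumes dist: "distinct (v # u # rest)" and cvu: "cl v = cl u"
  shows "char_poly (matL (v#u#rest) (Mw cl a b w)) =
    [:- a (cl u), 1:] * char_poly (matL (u#rest) (Mw cl a b (w(u := w u + w v))))"
proof -
  define xs where "xs = v # u # rest"
  define m where "m = Suc (length rest)"
  define M where "M = Mw cl a b w"
  define M' where "M' = Mw cl a b (w(u := w u + w v))"
  define C where "C = char_poly_matrix (matL xs M)"
  define C' where "C' = char_poly_matrix (matL (u#rest) M')"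
  have Cc: "C \<in> carrier_mat (Suc m) (Suc m)" unfolding C_def xs_def m_def by (rule cpm_matL_carrier, simp)
  have C'c: "C' \<in> carrier_mat m m" unfolding C'_def m_def by (rule cpm_matL_carrier, simp)
  define D1 where "D1 = addcol (-1) 0 1 C"
  define D where "D = addrow 1 1 0 D1"
  have D1c: "D1 \<in> carrier_mat (Suc m) (Suc m)" unfolding D1_def using Cc by auto
  have "det D1 = det C" unfolding D1_def by (rule det_addcol[OF _ _ Cc], auto simp: m_def)
  moreover have "det D = det D1" unfolding D_def by (rule det_addrow[OF _ _ D1c], auto)
  ultimately have detD: "det D = det C" by simp
  define A1 where "A1 = mat 1 1 (\<lambda>_. [:- a (cl u), 1:])"
  define A2 where "A2 = mat 1 m (\<lambda>(_,j). C $$ (0, Suc j))"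
  have Cij: "C $$ (i,j) = (if i = j then [:0,1:] else 0) + [:-(M (xs!i) (xs!j)):]"
    if "i < Suc m" "j < Suc m" for i j
    using that unfolding C_def by (subst cpm_index[of _ "Suc m"], auto simp: xs_def m_def)
  have C'ij: "C' $$ (i,j) = (if i = j then [:0,1:] else 0) + [:-(M' ((u#rest)!i) ((u#rest)!j)):]"
    if "i < m" "j < m" for i j
    using that unfolding C'_def by (subst cpm_index[of _ "m"], auto simp: m_def)
  have D1ij: "D1 $$ (i,j) = (if j = 0 then C $$ (i,0) - C $$ (i,1) else C $$ (i,j))"
    if "i < Suc m" "j < Suc m" for i j
    using that Cc unfolding D1_def by auto
  have Dij: "D $$ (i,j) = (if i = 1 then D1 $$ (0,j) + D1 $$ (1,j) else D1 $$ (i,j))"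
    if "i < Suc m" "j < Suc m" for i j
    using that D1c unfolding D_def by auto
  have xs0: "xs ! 0 = v" and xs1: "xs ! Suc 0 = u" unfolding xs_def by auto
  have xsi: "xs ! i = (u#rest) ! (i - 1)" if "i \<ge> 1" for i
    using that unfolding xs_def by (cases i, auto)
  have dist': "v \<noteq> u" "v \<notin> set rest" "u \<notin> set rest" using dist by auto
  have "D = four_block_mat A1 A2 (0\<^sub>m m 1) C'"
  proof (rule eq_matI)
    fix i j assume "i < dim_row (four_block_mat A1 A2 (0\<^sub>m m 1) C')"
       "j < dim_col (four_block_mat A1 A2 (0\<^sub>m m 1) C')"
    hence i: "i < Suc m" and j: "j < Suc m" using C'c by (auto simp: A1_def)
    have FB: "four_block_mat A1 A2 (0\<^sub>m m 1) C' $$ (i,j) =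
      (if i = 0 then if j = 0 then [:- a (cl u), 1:] else C $$ (0, j)
       else if j = 0 then 0 else C' $$ (i - 1, j - 1))"
      using i j C'c by (subst index_mat_four_block, auto simp: A1_def A2_def)
    have jj: "j \<noteq> 0 \<Longrightarrow> j - 1 < m" "i \<noteq> 0 \<Longrightarrow> i - 1 < m" using i j by auto
    have m1: "1 < Suc m" "0 < Suc m" "0 < m" unfolding m_def by simp_all
    have len: "length rest = m - 1" unfolding m_def by simp
    have xs2: "xs ! k = rest ! (k - 2)" if "k \<ge> 2" for k
      using that unfolding xs_def by (cases k; cases "k - 1", auto)
    have u2: "(u#rest) ! (k - 1) = rest ! (k - 2)" if "k \<ge> 2" for k
      using that by (cases k; cases "k - 1", auto)
    have inr: "rest ! (k - 2) \<in> set rest" "rest ! (k - 2) \<noteq> u" "rest ! (k - 2) \<noteq> v"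
      if "k \<ge> 2" "k < Suc m" for k
      using that dist' len by auto
    define c where "c = cl u"
    have c00: "C $$ (0,0) = [:-(a c + w v * b c c), 1:]"
      using Cij[of 0 0] m1 by (simp add: xs0 M_def Mw_def cvu c_def)
    have c01: "C $$ (0,1) = [:-(w v * b c c):]"
      using Cij[of 0 1] m1 dist' by (simp add: xs0 xs1 M_def Mw_def cvu c_def)
    have c10: "C $$ (1,0) = [:-(w u * b c c):]"
      using Cij[of 1 0] m1 dist' by (simp add: xs0 xs1 M_def Mw_def cvu c_def)
    have c11: "C $$ (1,1) = [:-(a c + w u * b c c), 1:]"
      using Cij[of 1 1] m1 by (simp add: xs1 M_def Mw_def cvu c_def)
    have c0j: "C $$ (0,k) = [:-(w v * b c (cl (rest ! (k - 2)))):]"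
      if "k \<ge> 2" "k < Suc m" for k
      using Cij[of 0 k] m1 that inr[OF that] by (simp add: xs0 xs2 M_def Mw_def cvu c_def)
    have c1j: "C $$ (1,k) = [:-(w u * b c (cl (rest ! (k - 2)))):]"
      if "k \<ge> 2" "k < Suc m" for k
      using Cij[of 1 k] m1 that inr[OF that] by (simp add: xs1 xs2 M_def Mw_def c_def)
    have ci0: "C $$ (k,0) = [:-(w (rest ! (k - 2)) * b (cl (rest ! (k - 2))) c):]"
      if "k \<ge> 2" "k < Suc m" for k
      using Cij[of k 0] m1 that inr[OF that] by (simp add: xs0 xs2 M_def Mw_def cvu c_def)
    have ci1: "C $$ (k,1) = [:-(w (rest ! (k - 2)) * b (cl (rest ! (k - 2))) c):]"
      if "k \<ge> 2" "k < Suc m" for k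
      using Cij[of k 1] m1 that inr[OF that] by (simp add: xs1 xs2 M_def Mw_def c_def)
    have cij: "C $$ (k,l) = C' $$ (k - 1, l - 1)"
      if "k \<ge> 2" "k < Suc m" "l \<ge> 1" "l < Suc m" for k l
    proof -
      have e: "xs ! k = (u#rest) ! (k - 1)" "xs ! l = (u#rest) ! (l - 1)" using that xsi by auto
      have ne: "(u#rest) ! (k - 1) \<noteq> u" using that u2 inr by simp
      have MM: "M' ((u#rest) ! (k - 1)) ((u#rest) ! (l - 1)) = M ((u#rest) ! (k - 1)) ((u#rest) ! (l - 1))"
        using ne by (simp add: M_def M'_def Mw_def)
      have kl: "(k - 1 = l - 1) = (k = l)" using that by auto
      have "k - 1 < m" "l - 1 < m" using that by auto
      from C'ij[OF this] have "C' $$ (k - 1, l - 1) = (if k = l then [:0,1:] else 0) + [:-(M (xs!k) (xs!l)):]"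
        unfolding kl MM e .
      thus ?thesis using Cij[of k l] that by simp
    qed
    have c'0: "C' $$ (0,0) = [:-(a c + (w u + w v) * b c c), 1:]"
      using C'ij[of 0 0] m1 by (simp add: M'_def Mw_def c_def)
    have c'j: "C' $$ (0,k - 1) = [:-((w u + w v) * b c (cl (rest ! (k - 2)))):]"
      if "k \<ge> 2" "k < Suc m" for k
      using C'ij[of 0 "k - 1"] m1 that inr[OF that] u2[OF that(1)] by (simp add: M'_def Mw_def c_def)
    have FB': "four_block_mat A1 A2 (0\<^sub>m m 1) C' $$ (i,j) =
      (if i = 0 then if j = 0 then [:- a c, 1:] else C $$ (0, j)
       else if j = 0 then 0 else C' $$ (i - 1, j - 1))" using FB c_def by simp
    have D00: "D $$ (0,0) = C $$ (0,0) - C $$ (0,1)" using Dij[of 0 0] D1ij[of 0 0] m1 by simp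
    have D0j: "D $$ (0,k) = C $$ (0,k)" if "k \<ge> 1" "k < Suc m" for k
      using Dij[of 0 k] D1ij[of 0 k] m1 that by simp
    have D10: "D $$ (1,0) = C $$ (0,0) - C $$ (0,1) + (C $$ (1,0) - C $$ (1,1))"
      using Dij[of 1 0] D1ij[of 0 0] D1ij[of 1 0] m1 by simp
    have D1j: "D $$ (1,k) = C $$ (0,k) + C $$ (1,k)" if "k \<ge> 1" "k < Suc m" for k
      using Dij[of 1 k] D1ij[of 0 k] D1ij[of 1 k] m1 that by simp
    have Di0: "D $$ (k,0) = C $$ (k,0) - C $$ (k,1)" if "k \<ge> 2" "k < Suc m" for k
      using Dij[of k 0] D1ij[of k 0] m1 that by simp
    have Dij': "D $$ (k,l) = C $$ (k,l)" if "k \<ge> 2" "k < Suc m" "l \<ge> 1" "l < Suc m" for k l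
      using Dij[of k l] D1ij[of k l] m1 that by simp
    consider "i = 0" "j = 0" | "i = 0" "j \<ge> 1" | "i = 1" "j = 0" | "i = 1" "j = 1" | "i = 1" "j \<ge> 2"
      | "i \<ge> 2" "j = 0" | "i \<ge> 2" "j \<ge> 1" by linarith
    thus "D $$ (i,j) = four_block_mat A1 A2 (0\<^sub>m m 1) C' $$ (i,j)"
    proof cases
      case 1 thus ?thesis unfolding FB' using D00 c00 c01 by simp
    next
      case 2 thus ?thesis unfolding FB' using D0j j by simp
    next
      case 3 thus ?thesis unfolding FB' using D10 c00 c01 c10 c11 by simp
    next
      case 4 thus ?thesis unfolding FB' using D1j[of 1] m1 c'0 c01 c11 by (simp add: algebra_simps)
    next
      case 5 thus ?thesis unfolding FB' using D1j[of j] j c'j[of j] c0j[of j] c1j[of j] by (simp add: algebra_simps)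
    next
      case 6 thus ?thesis unfolding FB' using Di0[of i] i ci0[of i] ci1[of i] by simp
    next
      case 7 thus ?thesis unfolding FB' using Dij'[of i j] i j cij[of i j] by simp
    qed
    qed (insert C'c Cc, auto simp: D_def D1_def A1_def)
  hence "det D = det A1 * det C'"
    using det_four_block_mat_lower_left_zero_col[of A1 A2 m "0\<^sub>m m 1" C'] C'c
    by (simp add: A1_def A2_def)
  also have "det A1 = [:- a (cl u), 1:]" unfolding A1_def by (subst det_single, auto)
  finally show ?thesis using detD unfolding char_poly_def C_def C'_def M_def M'_def xs_def by simp
qed


lemma general:
  assumes "distinct xs" "distinct ks" "set ks = cl ` set xs"
  shows "char_poly (matL xs (Mw cl a b w)) =
    (\<Prod>I \<in> cl ` set xs. [:- a I, 1:] ^ (card {x \<in> set xs. cl x = I} - 1)) *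
    char_poly (matL ks (\<lambda>I J. (if I = J then a I else 0) + (\<Sum>x \<in> {x \<in> set xs. cl x = I}. w x) * b I J))"
  using assms
proof (induction "length xs" arbitrary: xs w rule: less_induct)
  case less
  note dxs = less.prems(1) and dks = less.prems(2) and sks = less.prems(3)
  define S where "S = (\<lambda>I. {x \<in> set xs. cl x = I})"
  show ?case
  proof (cases "inj_on cl (set xs)")
    case True
    define F where "F = (\<lambda>I J. (if I = J then a I else 0) + (\<Sum>x \<in> S I. w x) * b I J)"
    have Sx: "S (cl x) = {x}" if "x \<in> set xs" for x using True that unfolding S_def inj_on_def by auto
    have "matL xs (Mw cl a b w) = matL (map cl xs) F"
    proof (rule eq_matI)
      fix i j assume "i < dim_row (matL (map cl xs) F)" "j < dim_col (matL (map cl xs) F)"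
      hence i: "i < length xs" and j: "j < length xs" by auto
      have "(xs ! i = xs ! j) = (cl (xs ! i) = cl (xs ! j))" using True i j
        by (metis inj_on_eq_iff nth_mem)
      thus "matL xs (Mw cl a b w) $$ (i,j) = matL (map cl xs) F $$ (i,j)"
        using i j Sx[of "xs ! i"] by (simp add: Mw_def F_def)
    qed auto
    also have "char_poly (matL (map cl xs) F) = char_poly (matL ks F)"
      by (rule char_poly_matL_perm, insert True dks dxs sks, auto simp: distinct_map)
    finally have 1: "char_poly (matL xs (Mw cl a b w)) = char_poly (matL ks F)" by simp
    have "(\<Prod>I \<in> cl ` set xs. [:- a I, 1:] ^ (card (S I) - 1)) = 1"
      by (rule prod.neutral, auto simp: Sx)
    thus ?thesis using 1 unfolding S_def F_def by simp
  next
    case False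
    then obtain v u where vu: "v \<in> set xs" "u \<in> set xs" "v \<noteq> u" "cl v = cl u"
      unfolding inj_on_def by blast
    define rest where "rest = filter (\<lambda>x. x \<noteq> v \<and> x \<noteq> u) xs"
    define ys where "ys = v # u # rest"
    have dys: "distinct ys" unfolding ys_def rest_def using dxs vu by auto
    have sys: "set ys = set xs" unfolding ys_def rest_def using vu by auto
    have lys: "length ys = length xs" using distinct_card[OF dys] distinct_card[OF dxs] sys by simp
    define w' where "w' = w(u := w u + w v)"
    define xs' where "xs' = u # rest"
    have dxs': "distinct xs'" using dys unfolding ys_def xs'_def by simp
    have sxs': "set xs' = set xs - {v}" using dys sys unfolding ys_def xs'_def by auto
    have lxs': "length xs' < length xs" using lys unfolding ys_def xs'_def by simp
    have img: "cl ` set xs' = cl ` set xs" unfolding sxs'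
    proof
      show "cl ` set xs \<subseteq> cl ` (set xs - {v})"
      proof
        fix y assume "y \<in> cl ` set xs"
        then obtain x where x: "x \<in> set xs" "y = cl x" by blast
        show "y \<in> cl ` (set xs - {v})"
        proof (cases "x = v")
          case True thus ?thesis using x vu by (metis Diff_iff image_eqI singletonD)
        next
          case False thus ?thesis using x by blast
        qed
      qed
    qed auto
    define S' where "S' = (\<lambda>I. {x \<in> set xs'. cl x = I})"
    have S'S: "S' I = S I - {v}" for I unfolding S'_def S_def sxs' by auto
    have fin: "finite (S I)" for I unfolding S_def by simp
    have WW: "(\<Sum>x \<in> S' I. w' x) = (\<Sum>x \<in> S I. w x)" for I
    proof (cases "I = cl u")
      case True
      have u: "u \<in> S I - {v}" "v \<in> S I" using vu True unfolding S_def by auto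
      have "(\<Sum>x \<in> S' I. w' x) = w' u + (\<Sum>x \<in> S I - {v} - {u}. w' x)"
        unfolding S'S using sum.remove[OF _ u(1), of w'] fin by simp
      also have "(\<Sum>x \<in> S I - {v} - {u}. w' x) = (\<Sum>x \<in> S I - {v} - {u}. w x)"
        by (rule sum.cong, auto simp: w'_def)
      also have "(\<Sum>x \<in> S I. w x) = w v + (w u + (\<Sum>x \<in> S I - {v} - {u}. w x))"
        using sum.remove[OF fin u(2), of w] sum.remove[OF _ u(1), of w] fin by simp
      ultimately show ?thesis by (simp add: w'_def)
    next
      case False
      hence "v \<notin> S I" "u \<notin> S I" using vu unfolding S_def by auto
      thus ?thesis unfolding S'S by (intro sum.cong, auto simp: w'_def)
    qed
    have "char_poly (matL xs (Mw cl a b w)) = char_poly (matL ys (Mw cl a b w))"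
      by (rule char_poly_matL_perm[symmetric], insert dxs dys sys, auto)
    also have "\<dots> = [:- a (cl u), 1:] * char_poly (matL xs' (Mw cl a b w'))"
      unfolding ys_def xs'_def w'_def by (rule twin, insert dys vu, auto simp: ys_def)
    also have "char_poly (matL xs' (Mw cl a b w')) =
      (\<Prod>I \<in> cl ` set xs'. [:- a I, 1:] ^ (card (S' I) - 1)) *
      char_poly (matL ks (\<lambda>I J. (if I = J then a I else 0) + (\<Sum>x \<in> S' I. w' x) * b I J))"
      unfolding S'_def by (rule less.hyps[OF lxs' dxs' dks], insert sks img, auto)
    also have "(\<lambda>I J. (if I = J then a I else 0) + (\<Sum>x \<in> S' I. w' x) * b I J)
      = (\<lambda>I J. (if I = J then a I else 0) + (\<Sum>x \<in> S I. w x) * b I J)" using WW by simp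
    also have "[:- a (cl u), 1:] * (\<Prod>I \<in> cl ` set xs'. [:- a I, 1:] ^ (card (S' I) - 1))
      = (\<Prod>I \<in> cl ` set xs. [:- a I, 1:] ^ (card (S I) - 1))"
    proof -
      let ?K = "cl ` set xs"
      have cK: "cl u \<in> ?K" using vu by auto
      have fK: "finite ?K" by simp
      have cS: "card (S (cl u)) - 1 = Suc (card (S' (cl u)) - 1)"
      proof -
        have "u \<in> S' (cl u)" unfolding S'S S_def using vu by auto
        hence "card (S' (cl u)) \<ge> 1" using fin[of "cl u"] unfolding S'S
          by (metis One_nat_def Suc_leI card_gt_0_iff empty_iff finite_Diff)
        moreover have "card (S' (cl u)) = card (S (cl u)) - 1" unfolding S'S
          using vu fin[of "cl u"] by (simp add: S_def)
        ultimately show ?thesis by simp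
      qed
      have oth: "(\<Prod>I \<in> ?K - {cl u}. [:- a I, 1:] ^ (card (S' I) - 1))
        = (\<Prod>I \<in> ?K - {cl u}. [:- a I, 1:] ^ (card (S I) - 1))"
      proof (rule prod.cong)
        fix I assume "I \<in> ?K - {cl u}"
        hence "v \<notin> S I" using vu unfolding S_def by auto
        thus "[:- a I, 1:] ^ (card (S' I) - 1) = [:- a I, 1:] ^ (card (S I) - 1)" unfolding S'S by simp
      qed simp
      have pw: "[:- a (cl u), 1:] ^ (card (S (cl u)) - 1) = [:- a (cl u), 1:] * [:- a (cl u), 1:] ^ (card (S' (cl u)) - 1)"
        unfolding cS by (simp only: power_Suc)
      show ?thesis unfolding img
        prod.remove[OF fK cK, of "\<lambda>I. [:- a I, 1:] ^ (card (S' I) - 1)"]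
          prod.remove[OF fK cK, of "\<lambda>I. [:- a I, 1:] ^ (card (S I) - 1)"] oth pw
        by (simp only: mult.assoc)
    qed
    ultimately show ?thesis unfolding S_def by (metis (no_types, lifting) mult.assoc)
  qed
qed


lemma diag_left:
  assumes "distinct ks"
  shows "matL ks (\<lambda>I J. if I = J then d I else 0) * matL ks f = matL ks (\<lambda>I J. d I * f I J)"
proof (rule eq_matI)
  fix i j assume "i < dim_row (matL ks (\<lambda>I J. d I * f I J))" "j < dim_col (matL ks (\<lambda>I J. d I * f I J))"
  hence i: "i < length ks" and j: "j < length ks" by auto
  have "(matL ks (\<lambda>I J. if I = J then d I else 0) * matL ks f) $$ (i,j) =
    (\<Sum>k \<in> {0..<length ks}. (if i = k then d (ks ! i) else 0) * f (ks ! k) (ks ! j))"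
    using i j assms by (auto simp: scalar_prod_def nth_eq_iff_index_eq)
  also have "\<dots> = (\<Sum>k \<in> {0..<length ks}. (if i = k then d (ks ! i) * f (ks ! k) (ks ! j) else 0))"
    by (rule sum.cong, auto)
  also have "\<dots> = d (ks ! i) * f (ks ! i) (ks ! j)" using i by (simp add: sum.delta)
  finally show "(matL ks (\<lambda>I J. if I = J then d I else 0) * matL ks f) $$ (i,j) = matL ks (\<lambda>I J. d I * f I J) $$ (i,j)"
    using i j by simp
qed auto

lemma diag_right:
  assumes "distinct ks"
  shows "matL ks f * matL ks (\<lambda>I J. if I = J then d I else 0) = matL ks (\<lambda>I J. f I J * d J)"
proof (rule eq_matI)
  fix i j assume "i < dim_row (matL ks (\<lambda>I J. f I J * d J))" "j < dim_col (matL ks (\<lambda>I J. f I J * d J))"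
  hence i: "i < length ks" and j: "j < length ks" by auto
  have "(matL ks f * matL ks (\<lambda>I J. if I = J then d I else 0)) $$ (i,j) =
    (\<Sum>k \<in> {0..<length ks}. f (ks ! i) (ks ! k) * (if k = j then d (ks ! k) else 0))"
    using i j assms by (auto simp: scalar_prod_def nth_eq_iff_index_eq)
  also have "\<dots> = (\<Sum>k \<in> {0..<length ks}. (if j = k then f (ks ! i) (ks ! j) * d (ks ! j) else 0))"
    by (rule sum.cong, auto)
  also have "\<dots> = f (ks ! i) (ks ! j) * d (ks ! j)" using j by (simp add: sum.delta)
  finally show "(matL ks f * matL ks (\<lambda>I J. if I = J then d I else 0)) $$ (i,j) = matL ks (\<lambda>I J. f I J * d J) $$ (i,j)"
    using i j by simp
qed auto

lemma matL_one: "distinct ks \<Longrightarrow> matL ks (\<lambda>I J. if I = J then 1 else 0) = 1\<^sub>m (length ks)"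
  by (rule eq_matI, auto simp: nth_eq_iff_index_eq)

lemma sym_quot:
  assumes dks: "distinct ks" and pos: "\<And>I. I \<in> set ks \<Longrightarrow> W I > 0"
  shows "char_poly (matL ks (\<lambda>I J. (if I = J then a I else 0) + W I * b I J)) =
         char_poly (matL ks (\<lambda>I J. (if I = J then a I else 0) + sqrt (W I * W J) * b I J))"
proof (rule char_poly_similar)
  define P where "P = matL ks (\<lambda>I J. if I = J then sqrt (W I) else 0)"
  define Q where "Q = matL ks (\<lambda>I J. if I = J then 1 / sqrt (W I) else 0)"
  define B where "B = matL ks (\<lambda>I J. (if I = J then a I else 0) + sqrt (W I * W J) * b I J)"
  define A where "A = matL ks (\<lambda>I J. (if I = J then a I else 0) + W I * b I J)"
  have "P * Q = matL ks (\<lambda>I J. sqrt (W I) * (if I = J then 1 / sqrt (W I) else 0))"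
    unfolding P_def Q_def by (rule diag_left[OF dks])
  also have "\<dots> = matL ks (\<lambda>I J. if I = J then 1 else 0)"
    unfolding matL_def by (rule cong_mat, auto, insert pos nth_mem, force+)
  finally have PQ: "P * Q = 1\<^sub>m (length ks)" using matL_one[OF dks] by simp
  have "Q * P = matL ks (\<lambda>I J. 1 / sqrt (W I) * (if I = J then sqrt (W I) else 0))"
    unfolding P_def Q_def by (rule diag_left[OF dks])
  also have "\<dots> = matL ks (\<lambda>I J. if I = J then 1 else 0)"
    unfolding matL_def by (rule cong_mat, auto, insert pos nth_mem, force+)
  finally have QP: "Q * P = 1\<^sub>m (length ks)" using matL_one[OF dks] by simp
  have "P * B * Q = matL ks (\<lambda>I J. sqrt (W I) * ((if I = J then a I else 0) + sqrt (W I * W J) * b I J) * (1 / sqrt (W J)))"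
    unfolding P_def Q_def B_def diag_left[OF dks] diag_right[OF dks] ..
  also have "\<dots> = A" unfolding A_def matL_def
  proof (rule cong_mat)
    fix i j assume "i < length ks" "j < length ks"
    hence p: "W (ks ! i) > 0" "W (ks ! j) > 0" using pos by auto
    show "(case (i, j) of (i, j) \<Rightarrow> sqrt (W (ks ! i)) * ((if ks ! i = ks ! j then a (ks ! i) else 0) +
        sqrt (W (ks ! i) * W (ks ! j)) * b (ks ! i) (ks ! j)) * (1 / sqrt (W (ks ! j)))) =
      (case (i, j) of (i, j) \<Rightarrow> (if ks ! i = ks ! j then a (ks ! i) else 0) + W (ks ! i) * b (ks ! i) (ks ! j))"
      using p by (auto simp: real_sqrt_mult field_simps)
  qed auto
  finally have "A = P * B * Q" by simp
  thus "similar_mat A B"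
    by (intro similar_matI[OF _ PQ QP], auto simp: A_def B_def P_def Q_def)
qed

definition clf :: "nat \<Rightarrow> nat \<Rightarrow> nat" where
  "clf n d = (\<Prod>p\<in>Xi n d. p ^ multiplicity p n)"

lemma pf_mult_pos: "p \<in> prime_factors n \<Longrightarrow> multiplicity p n > 0"
  by (simp add: prime_factors_multiplicity)

lemma mult_pp:
  fixes n :: nat
  assumes "S \<subseteq> prime_factors n" "prime q"
  shows "multiplicity q (\<Prod>p\<in>S. p ^ multiplicity p n) = (if q \<in> S then multiplicity q n else 0)"
  using assms by (intro multiplicity_prod_prime_powers, auto intro: finite_subset)

lemma Xi_pp:
  assumes "S \<subseteq> prime_factors n"
  shows "Xi n (\<Prod>p\<in>S. p ^ multiplicity p n) = S"
proof -
  have m: "\<And>q. q \<in> prime_factors n \<Longrightarrow> multiplicity q (\<Prod>p\<in>S. p ^ multiplicity p n) = (if q \<in> S then multiplicity q n else 0)"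
    using mult_pp[OF assms] in_prime_factors_imp_prime by blast
  have "q \<in> Xi n (\<Prod>p\<in>S. p ^ multiplicity p n) \<longleftrightarrow> q \<in> S" for q
    proof (cases "q \<in> prime_factors n")
      case True thus ?thesis using m[OF True] pf_mult_pos[OF True] unfolding Xi_def by auto
    next
      case False thus ?thesis using assms unfolding Xi_def by auto
    qed
  thus ?thesis by blast
qed

lemma pp_nz: "S \<subseteq> prime_factors n \<Longrightarrow> (\<Prod>p\<in>S. p ^ multiplicity p (n::nat)) \<noteq> 0"
proof -
  assume S: "S \<subseteq> prime_factors n"
  have "0 < (\<Prod>p\<in>S. p ^ multiplicity p (n::nat))"
  proof (rule prod_pos)
    fix p assume "p \<in> S"
    hence "prime p" using S in_prime_factors_imp_prime by blast
    thus "0 < p ^ multiplicity p n" using prime_gt_0_nat by simp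
  qed
  thus ?thesis by simp
qed

lemma pp_dvd:
  fixes n :: nat
  assumes "n > 0" "S \<subseteq> prime_factors n"
  shows "(\<Prod>p\<in>S. p ^ multiplicity p n) dvd n"
proof (rule multiplicity_le_imp_dvd)
  show "(\<Prod>p\<in>S. p ^ multiplicity p n) \<noteq> 0" by (rule pp_nz[OF assms(2)])
  fix q :: nat assume "prime q"
  thus "multiplicity q (\<Prod>p\<in>S. p ^ multiplicity p n) \<le> multiplicity q n"
    using mult_pp[OF assms(2)] by simp
qed

lemma mult_le_n: "d dvd n \<Longrightarrow> n > 0 \<Longrightarrow> multiplicity p d \<le> multiplicity p (n::nat)"
  by (rule dvd_imp_multiplicity_le, auto)

lemma div_eq:
  assumes "n > 0" "d dvd n" "e dvd n" "\<And>p. p \<in> prime_factors n \<Longrightarrow> multiplicity p d = multiplicity p e"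
  shows "d = (e::nat)"
proof -
  have nz: "d \<noteq> 0" "e \<noteq> 0" using assms by auto
  have "normalize d = normalize e"
  proof (rule multiplicity_eq_imp_eq[OF nz])
    fix p :: nat assume p: "prime p"
    show "multiplicity p d = multiplicity p e"
    proof (cases "p \<in> prime_factors n")
      case True thus ?thesis using assms(4) by simp
    next
      case False
      hence "multiplicity p n = 0" using p assms(1) by (simp add: prime_factors_multiplicity)
      thus ?thesis using mult_le_n[OF assms(2,1), of p] mult_le_n[OF assms(3,1), of p] by simp
    qed
  qed
  thus ?thesis by simp
qed

lemma Xi_sub: "Xi n d \<subseteq> prime_factors n" unfolding Xi_def by auto

lemma Uset_iff:
  assumes "n > 0"
  shows "d \<in> Uset n \<longleftrightarrow> d dvd n \<and> Xi n d \<noteq> {} \<and> Xi n d \<noteq> prime_factors n"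
proof
  assume d: "d \<in> Uset n"
  hence dn: "d dvd n" "d \<noteq> n" "\<not> essential n d" unfolding Uset_def ideals_def by auto
  have "Xi n d \<noteq> {}" using dn unfolding essential_def Xi_def by auto
  moreover have "Xi n d \<noteq> prime_factors n"
  proof
    assume "Xi n d = prime_factors n"
    hence "d = n" by (intro div_eq[OF assms dn(1)], auto simp: Xi_def)
    thus False using dn by simp
  qed
  ultimately show "d dvd n \<and> Xi n d \<noteq> {} \<and> Xi n d \<noteq> prime_factors n" using dn by simp
next
  assume d: "d dvd n \<and> Xi n d \<noteq> {} \<and> Xi n d \<noteq> prime_factors n"
  have "d \<noteq> 1"
  proof
    assume "d = 1"
    hence "Xi n d = {}" unfolding Xi_def using pf_mult_pos by fastforce
    thus False using d by simp
  qed
  moreover have "d \<noteq> n" using d unfolding Xi_def by auto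
  moreover have "\<not> essential n d" using d unfolding essential_def Xi_def by auto
  ultimately show "d \<in> Uset n" using d unfolding Uset_def ideals_def by auto
qed

lemma VG_iff: "J \<in> VG n \<longleftrightarrow> (\<exists>S. S \<subseteq> prime_factors n \<and> S \<noteq> {} \<and> S \<noteq> prime_factors n \<and> J = (\<Prod>p\<in>S. p ^ multiplicity p n))"
  unfolding VG_def by blast

lemma VG_props:
  assumes "n > 0" "J \<in> VG n"
  shows "J \<in> Uset n" "clf n J = J" "Xi n J \<noteq> {}" "Xi n J \<noteq> prime_factors n"
proof -
  obtain S where S0: "S \<subseteq> prime_factors n \<and> S \<noteq> {} \<and> S \<noteq> prime_factors n \<and> J = (\<Prod>p\<in>S. p ^ multiplicity p n)"
    using assms(2)[unfolded VG_iff] by (elim exE)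
  hence S: "S \<subseteq> prime_factors n" "S \<noteq> {}" "S \<noteq> prime_factors n" "J = (\<Prod>p\<in>S. p ^ multiplicity p n)"
    by auto
  have X: "Xi n J = S" using Xi_pp[OF S(1)] S(4) by simp
  show "J \<in> Uset n" unfolding Uset_iff[OF assms(1)] using X S pp_dvd[OF assms(1) S(1)] by simp
  show "clf n J = J" unfolding clf_def X using S(4) by simp
  show "Xi n J \<noteq> {}" "Xi n J \<noteq> prime_factors n" using X S by auto
qed

lemma clf_props:
  assumes "n > 0" "d \<in> Uset n"
  shows "clf n d \<in> VG n" "Xi n (clf n d) = Xi n d"
proof -
  have d: "d dvd n" "Xi n d \<noteq> {}" "Xi n d \<noteq> prime_factors n" using assms Uset_iff by auto
  show "Xi n (clf n d) = Xi n d" unfolding clf_def by (rule Xi_pp[OF Xi_sub])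
  show "clf n d \<in> VG n" unfolding VG_iff clf_def using d Xi_sub by blast
qed

lemma finite_VG: "finite (VG n)"
proof -
  have "VG n \<subseteq> (\<lambda>S. \<Prod>p\<in>S. p ^ multiplicity p n) ` Pow (prime_factors n)" unfolding VG_def by auto
  thus ?thesis by (rule finite_subset, simp)
qed

lemma finite_Uset: "n > 0 \<Longrightarrow> finite (Uset n)"
  by (rule finite_subset[of _ "{d. d dvd n}"], auto simp: Uset_def ideals_def)

lemma count_div:
  assumes n: "n > 0" and S: "S \<subseteq> prime_factors n"
  shows "card {d. d dvd n \<and> Xi n d = S} = (\<Prod>p\<in>prime_factors n - S. multiplicity p n)"
proof -
  let ?P = "prime_factors n"
  let ?A = "{d. d dvd n \<and> Xi n d = S}"
  define phi where "phi = (\<lambda>d. restrict (\<lambda>p. multiplicity p d) ?P)"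
  define R where "R = (\<lambda>p. if p \<in> S then {multiplicity p n} else {0..<multiplicity p n})"
  have inj: "inj_on phi ?A"
  proof (rule inj_onI)
    fix d e assume de: "d \<in> ?A" "e \<in> ?A" and eq: "phi d = phi e"
    have "multiplicity p d = multiplicity p e" if "p \<in> ?P" for p
      using fun_cong[OF eq, of p] that unfolding phi_def by simp
    thus "d = e" using de by - (rule div_eq[OF n], auto)
  qed
  have img: "phi ` ?A = PiE ?P R"
  proof
    show "phi ` ?A \<subseteq> PiE ?P R"
    proof
      fix f assume "f \<in> phi ` ?A"
      then obtain d where d: "d dvd n" "Xi n d = S" "f = phi d" by blast
      have "multiplicity p d \<in> R p" if "p \<in> ?P" for p
      proof (cases "p \<in> S")
        case True thus ?thesis using d that unfolding R_def Xi_def by auto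
      next
        case False
        hence "multiplicity p d \<noteq> multiplicity p n" using d that unfolding Xi_def by auto
        thus ?thesis using False mult_le_n[OF d(1) n, of p] unfolding R_def by auto
      qed
      thus "f \<in> PiE ?P R" unfolding d(3) phi_def by auto
    qed
  next
    show "PiE ?P R \<subseteq> phi ` ?A"
    proof
      fix e assume e: "e \<in> PiE ?P R"
      define d where "d = (\<Prod>p\<in>?P. p ^ e p)"
      have md: "multiplicity q d = (if q \<in> ?P then e q else 0)" if "prime q" for q
        unfolding d_def using that by (intro multiplicity_prod_prime_powers, auto)
      have ele: "e p \<le> multiplicity p n" if "p \<in> ?P" for p
        using e that unfolding R_def by (cases "p \<in> S", auto simp: PiE_def Pi_def)
      have dnz: "d \<noteq> 0" unfolding d_def by (subst prod_zero_iff, auto)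
      have dd: "d dvd n"
        by (rule multiplicity_le_imp_dvd[OF dnz], auto simp: md ele)
      have md': "multiplicity p d = e p" if "p \<in> ?P" for p
        using md[of p] that in_prime_factors_imp_prime by auto
      have "Xi n d = S"
      proof -
        have "p \<in> S \<longleftrightarrow> e p = multiplicity p n" if "p \<in> ?P" for p
          using e that pf_mult_pos[OF that] unfolding R_def by (cases "p \<in> S", auto simp: PiE_def Pi_def)
        thus ?thesis unfolding Xi_def using S md' by auto
      qed
      moreover have "phi d = e"
      proof (rule ext)
        fix p show "phi d p = e p"
          using e md' unfolding phi_def by (cases "p \<in> ?P", auto simp: PiE_def extensional_def)
      qed
      ultimately show "e \<in> phi ` ?A" using dd by force
    qed
  qed
  have "card ?A = card (PiE ?P R)" using card_image[OF inj] img by simp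
  also have "\<dots> = (\<Prod>p\<in>?P. card (R p))" by (simp add: card_PiE)
  also have "\<dots> = (\<Prod>p\<in>?P - S. card (R p)) * (\<Prod>p\<in>S. card (R p))"
    by (rule prod.subset_diff[OF S], simp)
  also have "(\<Prod>p\<in>S. card (R p)) = 1" by (rule prod.neutral, auto simp: R_def)
  also have "(\<Prod>p\<in>?P - S. card (R p)) = (\<Prod>p\<in>?P - S. multiplicity p n)"
    by (rule prod.cong, auto simp: R_def)
  finally show ?thesis by simp
qed


lemma clf_eq_iff:
  assumes n: "n > 0" and d: "d \<in> Uset n" and J: "J \<in> VG n"
  shows "clf n d = J \<longleftrightarrow> Xi n d = Xi n J"
proof
  assume "clf n d = J"
  thus "Xi n d = Xi n J" using clf_props(2)[OF n d] by simp
next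
  assume "Xi n d = Xi n J"
  hence "clf n d = clf n J" unfolding clf_def by simp
  thus "clf n d = J" using VG_props(2)[OF n J] by simp
qed

lemma class_card:
  assumes n: "n > 0" and J: "J \<in> VG n"
  shows "card {d \<in> Uset n. clf n d = J} = nI n J"
proof -
  have "{d \<in> Uset n. clf n d = J} = {d. d dvd n \<and> Xi n d = Xi n J}"
    using clf_eq_iff[OF n _ J] VG_props(3,4)[OF n J] by (auto simp: Uset_iff[OF n])
  thus ?thesis unfolding nI_def using count_div[OF n Xi_sub] by simp
qed

lemma Eadj_iff:
  assumes n: "n > 0" and x: "x \<in> Uset n" and y: "y \<in> Uset n"
  shows "Eadj n x y \<longleftrightarrow> Xi n x \<inter> Xi n y = {}"
proof -
  have xd: "x dvd n" "Xi n x \<noteq> {}" and yd: "y dvd n" using x y Uset_iff[OF n] by auto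
  have nz: "x \<noteq> 0" "y \<noteq> 0" using xd yd n by auto
  have g: "multiplicity p (gcd x y) = min (multiplicity p x) (multiplicity p y)" if "p \<in> prime_factors n" for p
    using multiplicity_gcd[OF nz] that in_prime_factors_imp_prime by blast
  have ess: "essential n (gcd x y) \<longleftrightarrow> Xi n x \<inter> Xi n y = {}"
  proof -
    have "gcd x y dvd n" using xd by (meson dvd_trans gcd_dvd1)
    moreover have "(min (multiplicity p x) (multiplicity p y) = multiplicity p n) \<longleftrightarrow>
      (multiplicity p x = multiplicity p n \<and> multiplicity p y = multiplicity p n)" for p
      using mult_le_n[OF xd(1) n, of p] mult_le_n[OF yd n, of p] by linarith
    ultimately show ?thesis unfolding essential_def Xi_def using g by auto
  qed
  show ?thesis unfolding Eadj_def ess using xd(2) by auto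
qed

lemma nI_pos: "nI n J > 0"
  unfolding nI_def by (rule prod_pos, auto simp: pf_mult_pos)

lemma deg_eq:
  assumes n: "n > 0" and x: "x \<in> Uset n"
  shows "card {w \<in> Uset n. Eadj n x w} = NI n (clf n x)"
proof -
  let ?K = "{J \<in> VG n. Xi n (clf n x) \<inter> Xi n J = {}}"
  have "{w \<in> Uset n. Eadj n x w} = (\<Union>J\<in>?K. {w \<in> Uset n. clf n w = J})"
  proof (rule Set.set_eqI)
    fix w
    show "w \<in> {w \<in> Uset n. Eadj n x w} \<longleftrightarrow> w \<in> (\<Union>J\<in>?K. {w \<in> Uset n. clf n w = J})"
    proof (cases "w \<in> Uset n")
      case True
      thus ?thesis using Eadj_iff[OF n x True] clf_props[OF n True] clf_props[OF n x] by auto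
    qed simp
  qed
  hence "card {w \<in> Uset n. Eadj n x w} = (\<Sum>J\<in>?K. card {w \<in> Uset n. clf n w = J})"
  proof -
    have "card (\<Union>J\<in>?K. {w \<in> Uset n. clf n w = J}) = (\<Sum>J\<in>?K. card {w \<in> Uset n. clf n w = J})"
      by (rule card_UN_disjoint, insert finite_Uset[OF n] finite_VG[of n], auto)
    thus ?thesis using \<open>{w \<in> Uset n. Eadj n x w} = _\<close> by simp
  qed
  also have "\<dots> = (\<Sum>J\<in>?K. nI n J)" by (rule sum.cong, auto simp: class_card[OF n])
  finally show ?thesis unfolding NI_def .
qed

lemma NI_pos:
  assumes n: "n > 0" and J: "J \<in> VG n"
  shows "NI n J > 0"
proof -
  define S where "S = prime_factors n - Xi n J"
  define J' where "J' = (\<Prod>p\<in>S. p ^ multiplicity p n)"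
  have S: "S \<subseteq> prime_factors n" "S \<noteq> {}" "S \<noteq> prime_factors n"
    using VG_props(3,4)[OF n J] Xi_sub[of n J] unfolding S_def by auto
  have J': "J' \<in> VG n" unfolding VG_iff J'_def using S by blast
  have "Xi n J' = S" unfolding J'_def by (rule Xi_pp[OF S(1)])
  hence "Xi n J \<inter> Xi n J' = {}" unfolding S_def by auto
  hence mem: "J' \<in> {K \<in> VG n. Xi n J \<inter> Xi n K = {}}" using J' by simp
  have "nI n J' \<le> NI n J" unfolding NI_def
    by (rule member_le_sum[OF mem], auto intro: finite_subset[OF _ finite_VG])
  thus ?thesis using nI_pos[of n J'] by simp
qed


lemma matL_cong: "(\<And>x y. x \<in> set xs \<Longrightarrow> y \<in> set xs \<Longrightarrow> f x y = g x y) \<Longrightarrow> matL xs f = matL xs g"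
  unfolding matL_def by (rule cong_mat, auto)

lemma vmat_matL: "vmat V f = matL (vlist V) f"
  unfolding vmat_def matL_def ..

lemma img_clf: "n > 0 \<Longrightarrow> clf n ` Uset n = VG n"
proof
  assume n: "n > 0"
  show "clf n ` Uset n \<subseteq> VG n" using clf_props(1)[OF n] by auto
  show "VG n \<subseteq> clf n ` Uset n"
  proof
    fix J assume J: "J \<in> VG n"
    thus "J \<in> clf n ` Uset n" using VG_props(1,2)[OF n J] by (metis image_eqI)
  qed
qed

lemma main_general:
  assumes n: "n > 0"
  shows "char_poly (matL (vlist (Uset n)) (Mw (clf n) a b (\<lambda>_. 1))) =
    (\<Prod>I\<in>VG n. [:- a I, 1:] ^ (nI n I - 1)) *
    char_poly (matL (vlist (VG n)) (\<lambda>I J. (if I = J then a I else 0) + sqrt (real (nI n I) * real (nI n J)) * b I J))"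
proof -
  let ?xs = "vlist (Uset n)"
  let ?ks = "vlist (VG n)"
  have dxs: "distinct ?xs" and sxs: "set ?xs = Uset n" unfolding vlist_def using finite_Uset[OF n] by auto
  have dks: "distinct ?ks" and sks: "set ?ks = VG n" unfolding vlist_def using finite_VG by auto
  have img: "clf n ` set ?xs = VG n" using img_clf[OF n] sxs by simp
  have cd: "card {x \<in> set ?xs. clf n x = I} = nI n I" if "I \<in> VG n" for I
    using class_card[OF n that] sxs by simp
  have G: "char_poly (matL ?xs (Mw (clf n) a b (\<lambda>_. 1))) =
    (\<Prod>I \<in> clf n ` set ?xs. [:- a I, 1:] ^ (card {x \<in> set ?xs. clf n x = I} - 1)) *
    char_poly (matL ?ks (\<lambda>I J. (if I = J then a I else 0) + (\<Sum>x \<in> {x \<in> set ?xs. clf n x = I}. (\<lambda>_. 1) x) * b I J))"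
    by (rule general[OF dxs dks], simp add: sks img)
  also have "(\<Prod>I \<in> clf n ` set ?xs. [:- a I, 1:] ^ (card {x \<in> set ?xs. clf n x = I} - 1))
    = (\<Prod>I\<in>VG n. [:- a I, 1:] ^ (nI n I - 1))" unfolding img by (rule prod.cong, auto simp: cd)
  also have "matL ?ks (\<lambda>I J. (if I = J then a I else 0) + (\<Sum>x \<in> {x \<in> set ?xs. clf n x = I}. (\<lambda>_. 1) x) * b I J)
    = matL ?ks (\<lambda>I J. (if I = J then a I else 0) + real (nI n I) * b I J)"
    by (rule matL_cong, auto simp: sks cd)
  also have "char_poly \<dots> = char_poly (matL ?ks (\<lambda>I J. (if I = J then a I else 0) + sqrt (real (nI n I) * real (nI n J)) * b I J))"
    by (rule sym_quot[OF dks], simp add: nI_pos)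
  finally show ?thesis .
qed

lemma matL_minus: "matL V f - matL V g = matL V (\<lambda>u v. f u v - g u v)"
  unfolding matL_def by (rule eq_matI, auto)

lemma matL_plus: "matL V f + matL V g = matL V (\<lambda>u v. f u v + g u v)"
  unfolding matL_def by (rule eq_matI, auto)

lemma deg_U: "n > 0 \<Longrightarrow> x \<in> Uset n \<Longrightarrow> deg (Uset n) (Eadj n) x = real (NI n (clf n x))"
  unfolding deg_def using deg_eq by simp

lemma Eadj_G: "n > 0 \<Longrightarrow> x \<in> Uset n \<Longrightarrow> y \<in> Uset n \<Longrightarrow> Eadj n x y = Gadj n (clf n x) (clf n y)"
  unfolding Gadj_def using Eadj_iff clf_props(2) by simp

lemma Gadj_irrefl: "n > 0 \<Longrightarrow> I \<in> VG n \<Longrightarrow> \<not> Gadj n I I"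
  unfolding Gadj_def using VG_props(3) by simp

lemma lap_form:
  assumes n: "n > 0"
  shows "laplacian (Uset n) (Eadj n) = matL (vlist (Uset n))
     (Mw (clf n) (\<lambda>I. real (NI n I)) (\<lambda>I J. - (if Gadj n I J then 1 else 0)) (\<lambda>_. 1))"
  unfolding laplacian_def deg_matrix_def adj_matrix_def vmat_matL unfolding matL_minus
proof (rule matL_cong)
  fix x y assume "x \<in> set (vlist (Uset n))" "y \<in> set (vlist (Uset n))"
  hence x: "x \<in> Uset n" and y: "y \<in> Uset n" unfolding vlist_def using finite_Uset[OF n] by auto
  show "(if x = y then deg (Uset n) (Eadj n) x else 0) - (if Eadj n x y then 1 else 0) =
    Mw (clf n) (\<lambda>I. real (NI n I)) (\<lambda>I J. - (if Gadj n I J then 1 else 0)) (\<lambda>_. 1) x y"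
    unfolding Mw_def using deg_U[OF n x] Eadj_G[OF n x y] Gadj_irrefl[OF n clf_props(1)[OF n x]] by auto
qed

lemma slap_form:
  assumes n: "n > 0"
  shows "signless_laplacian (Uset n) (Eadj n) = matL (vlist (Uset n))
     (Mw (clf n) (\<lambda>I. real (NI n I)) (\<lambda>I J. (if Gadj n I J then 1 else 0)) (\<lambda>_. 1))"
  unfolding signless_laplacian_def deg_matrix_def adj_matrix_def vmat_matL unfolding matL_plus
proof (rule matL_cong)
  fix x y assume "x \<in> set (vlist (Uset n))" "y \<in> set (vlist (Uset n))"
  hence x: "x \<in> Uset n" and y: "y \<in> Uset n" unfolding vlist_def using finite_Uset[OF n] by auto
  show "(if x = y then deg (Uset n) (Eadj n) x else 0) + (if Eadj n x y then 1 else 0) =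
    Mw (clf n) (\<lambda>I. real (NI n I)) (\<lambda>I J. (if Gadj n I J then 1 else 0)) (\<lambda>_. 1) x y"
    unfolding Mw_def using deg_U[OF n x] Eadj_G[OF n x y] Gadj_irrefl[OF n clf_props(1)[OF n x]] by auto
qed

lemma nlap_form:
  assumes n: "n > 0"
  shows "normalized_laplacian (Uset n) (Eadj n) = matL (vlist (Uset n))
     (Mw (clf n) (\<lambda>I. 1) (\<lambda>I J. - (if Gadj n I J then 1 else 0) / (sqrt (real (NI n I)) * sqrt (real (NI n J)))) (\<lambda>_. 1))"
proof -
  let ?xs = "vlist (Uset n)"
  have dxs: "distinct ?xs" unfolding vlist_def by simp
  let ?d = "\<lambda>u. 1 / sqrt (deg (Uset n) (Eadj n) u)"
  let ?L = "\<lambda>u v. (if u = v then deg (Uset n) (Eadj n) u else 0) - (if Eadj n u v then 1 else 0)"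
  have "normalized_laplacian (Uset n) (Eadj n) = matL ?xs (\<lambda>u v. ?d u * ?L u v * ?d v)"
    unfolding normalized_laplacian_def deg_inv_sqrt_matrix_def laplacian_def deg_matrix_def adj_matrix_def
      vmat_matL unfolding matL_minus unfolding diag_left[OF dxs] unfolding diag_right[OF dxs] ..
  also have "\<dots> = matL ?xs (Mw (clf n) (\<lambda>I. 1) (\<lambda>I J. - (if Gadj n I J then 1 else 0) / (sqrt (real (NI n I)) * sqrt (real (NI n J)))) (\<lambda>_. 1))"
  proof (rule matL_cong)
    fix x y assume "x \<in> set ?xs" "y \<in> set ?xs"
    hence x: "x \<in> Uset n" and y: "y \<in> Uset n" unfolding vlist_def using finite_Uset[OF n] by auto
    have pos: "real (NI n (clf n x)) > 0" using NI_pos[OF n clf_props(1)[OF n x]] by simp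
    show "?d x * ?L x y * ?d y = Mw (clf n) (\<lambda>I. 1) (\<lambda>I J. - (if Gadj n I J then 1 else 0) / (sqrt (real (NI n I)) * sqrt (real (NI n J)))) (\<lambda>_. 1) x y"
      unfolding Mw_def using deg_U[OF n x] deg_U[OF n y] Eadj_G[OF n x y] Gadj_irrefl[OF n clf_props(1)[OF n x]] pos
      by auto
  qed
  finally show ?thesis .
qed

theorem mainTheorem9:
  fixes n :: nat
  assumes "n > 0"
    and "\<exists>p\<in>prime_factors n. multiplicity p n > 1"
  shows "(char_poly (laplacian (Uset n) (Eadj n)) =
           (\<Prod>I\<in>{I\<in>VG n. nI n I > 1}. [:- real (NI n I), 1:] ^ (nI n I - 1)) * char_poly (CL n)) \<and>
         (char_poly (signless_laplacian (Uset n) (Eadj n)) =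
           (\<Prod>I\<in>VG n. [:- real (NI n I), 1:] ^ (nI n I - 1)) * char_poly (CQ n)) \<and>
         (char_poly (normalized_laplacian (Uset n) (Eadj n)) =
           [:- 1, 1:] ^ (\<Sum>I\<in>VG n. nI n I - 1) * char_poly (CNL n))"
proof -
  note n = assms(1)
  have sks: "set (vlist (VG n)) = VG n" unfolding vlist_def using finite_VG by auto
  have prodeq: "(\<Prod>I\<in>{I\<in>VG n. nI n I > 1}. [:- real (NI n I), 1:] ^ (nI n I - 1)) =
      (\<Prod>I\<in>VG n. [:- real (NI n I), 1:] ^ (nI n I - 1))"
  proof (rule prod.mono_neutral_left)
    show "finite (VG n)" by (rule finite_VG)
    show "\<forall>i\<in>VG n - {I \<in> VG n. 1 < nI n I}. [:- real (NI n i), 1:] ^ (nI n i - 1) = 1"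
    proof
      fix i assume "i \<in> VG n - {I \<in> VG n. 1 < nI n I}"
      hence "nI n i - 1 = 0" by auto
      thus "[:- real (NI n i), 1:] ^ (nI n i - 1) = 1" by simp
    qed
  qed auto
  have 1: "char_poly (laplacian (Uset n) (Eadj n)) =
      (\<Prod>I\<in>VG n. [:- real (NI n I), 1:] ^ (nI n I - 1)) * char_poly (CL n)"
    unfolding lap_form[OF n] main_general[OF n] CL_def vmat_matL
    by (rule arg_cong[where f = "\<lambda>M. _ * char_poly M"], rule matL_cong,
        auto simp: sks Gadj_irrefl[OF n] of_nat_mult[symmetric] simp del: of_nat_mult)
  have 2: "char_poly (signless_laplacian (Uset n) (Eadj n)) =
      (\<Prod>I\<in>VG n. [:- real (NI n I), 1:] ^ (nI n I - 1)) * char_poly (CQ n)"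
    unfolding slap_form[OF n] main_general[OF n] CQ_def vmat_matL
    by (rule arg_cong[where f = "\<lambda>M. _ * char_poly M"], rule matL_cong,
        auto simp: sks Gadj_irrefl[OF n] of_nat_mult[symmetric] simp del: of_nat_mult)
  have 3: "char_poly (normalized_laplacian (Uset n) (Eadj n)) =
      [:- 1, 1:] ^ (\<Sum>I\<in>VG n. nI n I - 1) * char_poly (CNL n)"
    unfolding nlap_form[OF n] main_general[OF n] CNL_def vmat_matL power_sum
    by (rule arg_cong[where f = "\<lambda>M. _ * char_poly M"], rule matL_cong,
        auto simp: sks Gadj_irrefl[OF n] real_sqrt_mult real_sqrt_divide)
  show ?thesis using 1 2 3 prodeq by simp
qed

end
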